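(* Let $(f,g,h,X,U)$ be a balanced quintuple with $\operatorname{card}(X)=n\ge1$, and let $x_0\in X$ satisfy $h(x_0)\neq0$. Then there is a neighborhood of $x_0$ on which $f$ coincides with a polynomial of degree at most $n-2$ (where the zero function is regarded as a polynomial of degree $-1$; so for $n=1$ the conclusion is that $f$ vanishes near $x_0$).
   Context: Let $U\subset\mathbb{R}$ be open and $X\subset U$ a finite set with $\operatorname{card}(X)\ge1$. Let $f\colon U\to\mathbb{R}$ be continuous, $g\colon X\to\mathbb{R}$ injective, and $h\colon X\to\mathbb{R}$ arbitrary. The quintuple $(f,g,h,X,U)$ is called balanced if there is $\epsilon>0$ such that $$\sum_{x\in X} h(x)\,f\big(x+s+t\,g(x)\big)=0\quad\text{for all } s,t\in\mathbb{R} \text{ with } |s|,|t|<\epsilon.$$ *)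

theory Defs
  imports "HOL-Analysis.Analysis" "HOL-Computational_Algebra.Polynomial"
begin

definition balanced ::
  "(real \<Rightarrow> real) \<Rightarrow> (real \<Rightarrow> real) \<Rightarrow> (real \<Rightarrow> real) \<Rightarrow> real set \<Rightarrow> real set \<Rightarrow> bool" where
  "balanced f g h X U \<longleftrightarrow>
     open U \<and> finite X \<and> X \<noteq> {} \<and> X \<subseteq> U \<and> continuous_on U f \<and> inj_on g X \<and>
     (\<exists>\<epsilon>>0. \<forall>s t. \<bar>s\<bar> < \<epsilon> \<longrightarrow> \<bar>t\<bar> < \<epsilon> \<longrightarrow>
        (\<Sum>x\<in>X. h x * f (x + s + t * g x)) = 0)"

end

theory Submission
  imports Defs
begin

fun D :: "real list \<Rightarrow> (real \<Rightarrow> real) \<Rightarrow> real \<Rightarrow> real" where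
  "D [] f y = f y"
| "D (d#ds) f y = D ds f (y + d) - D ds f y"

fun D2 :: "(real \<times> real) list \<Rightarrow> (real \<Rightarrow> real \<Rightarrow> real) \<Rightarrow> real \<Rightarrow> real \<Rightarrow> real" where
  "D2 [] F s t = F s t"
| "D2 ((a,b)#ds) F s t = D2 ds F (s + a) (t + b) - D2 ds F s t"

lemma D_zero_step: "0 \<in> set es \<Longrightarrow> D es F y = 0"
  by (induction es arbitrary: y) auto

lemma D_shift: "D es (\<lambda>z. f (c + z)) u = D es f (c + u)"
  by (induction es arbitrary: u) (auto simp: add.assoc)

lemma D2_zero:
  assumes "\<And>s t. \<bar>s\<bar> < \<epsilon> \<Longrightarrow> \<bar>t\<bar> < \<epsilon> \<Longrightarrow> F s t = 0"
  shows "\<bar>s\<bar> + sum_list (map (\<lambda>v. \<bar>fst v\<bar>) ds) < \<epsilon> \<Longrightarrow>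
         \<bar>t\<bar> + sum_list (map (\<lambda>v. \<bar>snd v\<bar>) ds) < \<epsilon> \<Longrightarrow> D2 ds F s t = 0"
proof (induction ds arbitrary: s t)
  case Nil then show ?case using assms by simp
next
  case (Cons v ds)
  obtain a b where v: "v = (a,b)" by fastforce
  have f1: "\<bar>s + a\<bar> \<le> \<bar>s\<bar> + \<bar>a\<bar>" "\<bar>t + b\<bar> \<le> \<bar>t\<bar> + \<bar>b\<bar>" by auto
  have f2: "0 \<le> sum_list (map (\<lambda>v. \<bar>fst v\<bar>) ds)" "0 \<le> sum_list (map (\<lambda>v. \<bar>snd v\<bar>) ds)"
    by (auto intro!: sum_list_nonneg)
  have f3: "0 \<le> \<bar>a\<bar>" "0 \<le> \<bar>b\<bar>" by auto
  have "D2 ds F (s+a) (t+b) = 0" "D2 ds F s t = 0"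
  proof -
    have pr: "\<bar>s\<bar> + (\<bar>a\<bar> + sum_list (map (\<lambda>v. \<bar>fst v\<bar>) ds)) < \<epsilon>"
             "\<bar>t\<bar> + (\<bar>b\<bar> + sum_list (map (\<lambda>v. \<bar>snd v\<bar>) ds)) < \<epsilon>"
      using Cons.prems v by simp_all
    show "D2 ds F (s+a) (t+b) = 0" "D2 ds F s t = 0"
      using pr f1 f2 f3 by (intro Cons.IH; linarith)+
  qed
  then show ?case using v by simp
qed

lemma D2_sum: "D2 ds (\<lambda>s t. \<Sum>x\<in>X. h x * W x s t) s t = (\<Sum>x\<in>X. h x * D2 ds (W x) s t)"
  by (induction ds arbitrary: s t) (auto simp: sum_subtractf right_diff_distrib)

lemma D2_comp: "D2 ds (\<lambda>s t. F (s + t * \<gamma>)) s t = D (map (\<lambda>(a,b). a + b * \<gamma>) ds) F (s + t * \<gamma>)"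
proof (induction ds arbitrary: s t)
  case Nil then show ?case by simp
next
  case (Cons v ds)
  obtain a b where v: "v = (a,b)" by fastforce
  have eq: "s + a + (t + b) * \<gamma> = s + t * \<gamma> + (a + b * \<gamma>)" by (simp add: algebra_simps)
  have "D2 ((a,b)#ds) (\<lambda>s t. F (s + t * \<gamma>)) s t = D (map (\<lambda>(a,b). a + b * \<gamma>) ds) F (s + a + (t + b) * \<gamma>) - D (map (\<lambda>(a,b). a + b * \<gamma>) ds) F (s + t * \<gamma>)"
    by (simp only: D2.simps Cons.IH)
  also have "\<dots> = D (map (\<lambda>(a,b). a + b * \<gamma>) ((a,b)#ds)) F (s + t * \<gamma>)"
    by (simp only: eq list.map prod.case D.simps)
  finally show ?case using v by simp
qed

lemma D2_kill: "a + b * \<gamma> = 0 \<Longrightarrow> (a,b) \<in> set ds \<Longrightarrow> D2 ds (\<lambda>s t. F (s + t * \<gamma>)) s t = 0"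
  unfolding D2_comp by (rule D_zero_step) force

lemma D_rep: "\<exists>b::nat\<Rightarrow>real. b 0 \<noteq> 0 \<and> (\<forall>f y h. D (replicate m h) f y = (\<Sum>j\<le>m. b j * f (y + real j * h)))"
proof (induction m)
  case 0 then show ?case by (intro exI[of _ "\<lambda>_. 1"]) simp
next
  case (Suc m)
  then obtain b :: "nat \<Rightarrow> real" where b0: "b 0 \<noteq> 0" and bD: "\<And>f y h. D (replicate m h) f y = (\<Sum>j\<le>m. b j * f (y + real j * h))" by blast
  define b' where "b' j = (if j = 0 then 0 else b (j-1)) - (if j \<le> m then b j else 0)" for j
  have "D (replicate (Suc m) h) f y = (\<Sum>j\<le>Suc m. b' j * f (y + real j * h))" for f y h
  proof -
    have 1: "(\<Sum>j\<le>Suc m. (if j = 0 then 0 else b (j-1)) * f (y + real j * h)) = (\<Sum>j\<le>m. b j * f (y + h + real j * h))"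
      by (subst sum.atMost_Suc_shift) (simp add: algebra_simps)
    have 2: "(\<Sum>j\<le>Suc m. (if j \<le> m then b j else 0) * f (y + real j * h)) = (\<Sum>j\<le>m. b j * f (y + real j * h))"
      by (simp add: sum.atMost_Suc)
    show ?thesis unfolding b'_def left_diff_distrib sum_subtractf 1 2 by (simp add: bD)
  qed
  moreover have "b' 0 \<noteq> 0" using b0 by (simp add: b'_def)
  ultimately show ?case by blast
qed

lemma sum_list_le_len: "(\<And>x. x \<in> set xs \<Longrightarrow> x \<le> B) \<Longrightarrow> sum_list xs \<le> real (length xs) * B"
  by (induction xs) (auto simp: algebra_simps intro: add_mono)

lemma D_deriv:
  assumes "\<And>z. z \<in> ball x0 R \<Longrightarrow> (f has_real_derivative f' z) (at z)"
  shows "dist x0 y + sum_list (map abs es) < R \<Longrightarrow> ((\<lambda>z. D es f z) has_real_derivative D es f' y) (at y)"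
proof (induction es arbitrary: y)
  case Nil then show ?case using assms by simp
next
  case (Cons e es)
  have "dist x0 (y + e) \<le> dist x0 y + \<bar>e\<bar>" by (simp add: dist_real_def)
  then have "((\<lambda>z. D es f z) has_real_derivative D es f' (y+e)) (at (y+e))"
    using Cons by (intro Cons.IH) simp
  then have a: "((\<lambda>z. D es f (z+e)) has_real_derivative D es f' (y+e)) (at y)"
    by (simp add: DERIV_shift)
  have b: "((\<lambda>z. D es f z) has_real_derivative D es f' y) (at y)"
    using Cons by (intro Cons.IH) simp
  show ?case using DERIV_diff[OF a b] by simp
qed

lemma regular:
  assumes r: "0 < r" and cont: "continuous_on (ball x0 r) f"
  and hyp: "\<And>y h. y \<in> ball x0 r \<Longrightarrow> \<bar>h\<bar> < r \<Longrightarrow> D (replicate m h) f y = 0"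
  shows "\<exists>r1>0. r1 \<le> r \<and> (\<exists>f'. continuous_on (ball x0 r1) f' \<and> (\<forall>y\<in>ball x0 r1. (f has_real_derivative f' y) (at y)))"
proof -
  obtain b :: "nat \<Rightarrow> real" where b0: "b 0 \<noteq> 0" and bD: "\<And>f y h. D (replicate m h) f y = (\<Sum>j\<le>m. b j * f (y + real j * h))"
    using D_rep by blast
  define r' where "r' = r/2"
  define F where "F z = integral {x0 - r'..z} f" for z
  have contI: "continuous_on {x0-r'..x0+r'} f" using cont
    by (rule continuous_on_subset) (use r in \<open>auto simp: r'_def dist_real_def abs_le_iff\<close>)
  have Fd: "(F has_real_derivative f z) (at z)" if "z \<in> ball x0 r'" for z
  proof -
    have "z \<in> {x0-r'..x0+r'}" using that by (auto simp: dist_real_def)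
    from integral_has_real_derivative[OF contI this]
    have "(F has_real_derivative f z) (at z within {x0-r'..x0+r'})" unfolding F_def .
    moreover have "z \<in> interior {x0-r'..x0+r'}" using that by (simp add: dist_real_def abs_less_iff)
    ultimately show ?thesis by (metis at_within_interior)
  qed
  define a where "a = r' / (2 * (real m + 1))"
  have a: "0 < a" using r by (simp add: a_def r'_def)
  have ma: "real m * a < r'/2" using r
    by (simp add: a_def r'_def field_simps)
  have ar: "a < r" using r by (simp add: a_def r'_def field_simps) (simp add: add_pos_nonneg)
  have inb: "y + real j * h \<in> ball x0 r'" if "y \<in> ball x0 (r'/2)" "j \<le> m" "0 \<le> h" "h \<le> a" for y j h
  proof -
    have i1: "real j * h \<le> real m * a" using that a by (intro mult_mono) auto
    have i2: "0 \<le> real j * h" using that by simp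
    have i3: "\<bar>x0 - y\<bar> < r'/2" using that(1) by (simp add: dist_real_def)
    show ?thesis using i1 i2 i3 ma unfolding mem_ball dist_real_def by (simp only: abs_less_iff) linarith
  qed
  define r1 where "r1 = r'/2"
  have key: "b 0 * (a * f y) + (\<Sum>j\<in>{..m}-{0}. b j * ((F (y + real j * a) - F y) / real j)) = 0"
    if y: "y \<in> ball x0 r1" for y
  proof -
    define K where "K h = (\<Sum>j\<le>m. b j * (if j = 0 then h * f y else F (y + real j * h) / real j))" for h
    have "(K has_real_derivative 0) (at h within {0..a})" if h: "h \<in> {0..a}" for h
    proof -
      have "(K has_real_derivative (\<Sum>j\<le>m. b j * f (y + real j * h))) (at h)"
        unfolding K_def
      proof (rule DERIV_sum)
        fix j assume j: "j \<in> {..m}"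
        show "((\<lambda>h. b j * (if j=0 then h * f y else F (y + real j*h)/real j)) has_real_derivative b j * f (y + real j * h)) (at h)"
        proof (cases "j = 0")
          case True then show ?thesis by (auto intro!: derivative_eq_intros)
        next
          case False
          have "(F has_real_derivative f (y + real j * h)) (at (y + real j * h))"
            using Fd inb[of y j h] y h j by (auto simp: r1_def)
          then have "((\<lambda>h. F (y + real j * h)) has_real_derivative f (y + real j*h) * real j) (at h)"
            by (rule DERIV_chain2) (auto intro!: derivative_eq_intros)
          then have "((\<lambda>h. b j * (F (y + real j*h)/real j)) has_real_derivative b j * (f (y + real j*h) * real j / real j)) (at h)"
            by (intro DERIV_cmult DERIV_cdivide)
          then show ?thesis using False by simp
        qed
      qed
      moreover have "(\<Sum>j\<le>m. b j * f (y + real j * h)) = 0"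
        using hyp[of y h] bD[of h f y] y h ar by (auto simp: r1_def r'_def dist_real_def)
      ultimately show ?thesis using has_field_derivative_at_within by fastforce
    qed
    then obtain c where "\<forall>x\<in>{0..a}. K x = c"
      using has_field_derivative_zero_constant[of "{0..a}" K] by auto
    then have "K a - K 0 = 0" using a by auto
    moreover have "K a - K 0 = (\<Sum>j\<le>m. b j * (if j=0 then a * f y else (F (y + real j * a) - F y)/real j))"
      unfolding K_def sum_subtractf[symmetric] by (intro sum.cong) (auto simp: algebra_simps diff_divide_distrib)
    moreover have "(\<Sum>j\<le>m. b j * (if j=0 then a * f y else (F (y + real j * a) - F y)/real j))
       = b 0 * (a * f y) + (\<Sum>j\<in>{..m}-{0}. b j * ((F (y + real j * a) - F y) / real j))"
      by (subst sum.remove[of _ 0]) auto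
    ultimately show ?thesis by simp
  qed
  define G where "G y = - (\<Sum>j\<in>{..m}-{0}. b j * ((F (y + real j * a) - F y) / real j)) / (b 0 * a)" for y
  define G' where "G' y = - (\<Sum>j\<in>{..m}-{0}. b j * ((f (y + real j * a) - f y) / real j)) / (b 0 * a)" for y
  have fG: "f y = G y" if "y \<in> ball x0 r1" for y
    using key[OF that] b0 a unfolding G_def by (simp add: field_simps)
  have Gd: "(G has_real_derivative G' y) (at y)" if y: "y \<in> ball x0 r1" for y
    unfolding G_def G'_def
  proof (intro DERIV_cdivide DERIV_minus DERIV_sum DERIV_cmult DERIV_diff)
    fix j assume j: "j \<in> {..m}-{0}"
    have "(F has_real_derivative f (y + real j * a)) (at (y + real j * a))"
      using Fd inb[of y j a] y j a by (auto simp: r1_def)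
    then show "((\<lambda>x. F (x + real j * a)) has_real_derivative f (y + real j * a)) (at y)"
      by (simp add: DERIV_shift)
    show "(F has_real_derivative f y) (at y)"
      by (intro Fd) (use y zero_le_dist[of x0 y] in \<open>auto simp: r1_def; linarith\<close>)
  qed
  have fd: "(f has_real_derivative G' y) (at y)" if y: "y \<in> ball x0 r1" for y
    by (rule has_field_derivative_transform_within_open[OF Gd[OF y] open_ball y]) (simp add: fG)
  have cf: "continuous_on (ball x0 r1) f" using cont
    by (rule continuous_on_subset) (auto simp: r1_def r'_def dist_real_def; smt (verit) abs_ge_zero)
  have cj: "continuous_on (ball x0 r1) (\<lambda>y. f (y + real j * a))" if "j \<in> {..m}-{0}" for j
  proof (rule continuous_on_compose2[OF cont])
    show "continuous_on (ball x0 r1) (\<lambda>y. y + real j * a)" by (intro continuous_intros)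
    show "(\<lambda>y. y + real j * a) ` ball x0 r1 \<subseteq> ball x0 r"
      using inb[of _ j a] that a by (auto simp: r1_def r'_def dist_real_def; smt (verit) abs_ge_zero)
  qed
  have "continuous_on (ball x0 r1) G'"
    unfolding G'_def by (intro continuous_intros cj cf) (use b0 a in auto)
  moreover have "0 < r1" "r1 \<le> r" using r by (auto simp: r1_def r'_def)
  ultimately show ?thesis using fd by blast
qed

lemma poly_local:
  "0 < r \<Longrightarrow> continuous_on (ball x0 r) f \<Longrightarrow>
   (\<And>y es. y \<in> ball x0 r \<Longrightarrow> length es = k \<Longrightarrow> (\<forall>e\<in>set es. \<bar>e\<bar> < r) \<Longrightarrow> D es f y = 0) \<Longrightarrow>
   \<exists>c e. e > 0 \<and> (\<forall>y\<in>ball x0 e. f y = (\<Sum>i<k. c i * y^i))"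
proof (induction k arbitrary: f r x0)
  case 0
  have "f y = (\<Sum>i<0. (\<lambda>_. 0) i * y^i)" if "y \<in> ball x0 r" for y
    using 0(3)[of y "[]"] that by simp
  then show ?case using 0(1) by (intro exI[of _ "\<lambda>_. 0"] exI[of _ r]) auto
next
  case (Suc k)
  note r = Suc.prems(1) and cont = Suc.prems(2) and hyp = Suc.prems(3)
  have "\<exists>r1>0. r1 \<le> r \<and> (\<exists>f'. continuous_on (ball x0 r1) f' \<and> (\<forall>y\<in>ball x0 r1. (f has_real_derivative f' y) (at y)))"
  proof (rule regular[OF r cont, of "Suc k"])
    fix y h :: real assume "y \<in> ball x0 r" "\<bar>h\<bar> < r"
    then show "D (replicate (Suc k) h) f y = 0" by (intro hyp) auto
  qed
  then obtain r1 f' where r1: "0 < r1" "r1 \<le> r" and cf': "continuous_on (ball x0 r1) f'"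
    and fd: "\<And>y. y \<in> ball x0 r1 \<Longrightarrow> (f has_real_derivative f' y) (at y)" by blast
  define \<rho> where "\<rho> = r1 / (real k + 1)"
  have \<rho>: "0 < \<rho>" "\<rho> \<le> r1" using r1 by (auto simp: \<rho>_def field_simps)
  have hyp': "D es f' y = 0" if y: "y \<in> ball x0 \<rho>" and l: "length es = k" and es: "\<forall>e\<in>set es. \<bar>e\<bar> < \<rho>" for y es
  proof -
    have "sum_list (map abs es) \<le> real (length (map abs es)) * \<rho>"
      by (rule sum_list_le_len) (use es in auto)
    then have sb: "sum_list (map abs es) \<le> real k * \<rho>" using l by simp
    have d: "dist x0 y < \<rho>" using y by simp
    have kk: "real k + 1 \<noteq> 0" by linarith
    have eq0: "\<rho> * (real k + 1) = r1" unfolding \<rho>_def using kk by simp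
    have eq: "\<rho> + real k * \<rho> = r1" using eq0 by (simp add: algebra_simps)
    have "dist x0 y + sum_list (map abs es) < r1"
      using d sb eq by linarith
    from D_deriv[OF fd this] have d1: "((\<lambda>z. D es f z) has_real_derivative D es f' y) (at y)" .
    have yr: "y \<in> ball x0 r" using y \<rho> r1 by auto
    have cst: "D es f z = D es f y" if z: "z \<in> ball y r" for z
    proof -
      have zy: "\<bar>z - y\<bar> < r" using z by (simp add: dist_real_def abs_minus_commute)
      have "\<forall>e\<in>set ((z-y)#es). \<bar>e\<bar> < r" using zy es \<rho> r1 by force
      then have "D ((z-y)#es) f y = 0"
        using hyp[OF yr, of "(z-y)#es"] l by simp
      then show ?thesis by simp
    qed
    have d2: "((\<lambda>z. D es f z) has_real_derivative 0) (at y)"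
      by (rule has_field_derivative_transform_within_open[OF DERIV_const[of "D es f y"] open_ball[of y r]])
         (use r in simp, metis cst)
    show ?thesis using DERIV_unique[OF d1 d2] .
  qed
  have cf'': "continuous_on (ball x0 \<rho>) f'" using cf' by (rule continuous_on_subset) (use \<rho> in auto)
  obtain c e where e: "e > 0" and fc: "\<And>y. y \<in> ball x0 e \<Longrightarrow> f' y = (\<Sum>i<k. c i * y^i)"
    using Suc.IH[OF \<rho>(1) cf'' hyp'] by blast
  define e2 where "e2 = min e r1"
  have e2: "0 < e2" using e r1 by (simp add: e2_def)
  define P where "P y = (\<Sum>i<k. c i * y^(Suc i) / real (Suc i))" for y
  have Pd: "(P has_real_derivative (\<Sum>i<k. c i * y^i)) (at y)" for y
    unfolding P_def
  proof (rule DERIV_sum)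
    fix i assume "i \<in> {..<k}"
    have "((\<lambda>y. y^Suc i) has_real_derivative real (Suc i) * y^i) (at y)" using DERIV_pow[of "Suc i" y] by simp
    then have "((\<lambda>y. c i * y^Suc i / real (Suc i)) has_real_derivative c i * (real (Suc i) * y^i) / real (Suc i)) (at y)"
      by (intro DERIV_cdivide DERIV_cmult)
    then show "((\<lambda>y. c i * y^Suc i / real (Suc i)) has_real_derivative c i * y^i) (at y)"
      by (simp del: of_nat_Suc)
  qed
  have Qd: "((\<lambda>y. f y - P y) has_real_derivative 0) (at y within ball x0 e2)" if y: "y \<in> ball x0 e2" for y
  proof -
    have "((\<lambda>y. f y - P y) has_real_derivative f' y - (\<Sum>i<k. c i * y^i)) (at y)"
      using fd[of y] Pd[of y] y by (intro DERIV_diff) (auto simp: e2_def)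
    moreover have "f' y - (\<Sum>i<k. c i * y^i) = 0" using fc[of y] y by (auto simp: e2_def)
    ultimately show ?thesis using has_field_derivative_at_within by fastforce
  qed
  obtain C where C: "\<forall>x\<in>ball x0 e2. f x - P x = C"
    using has_field_derivative_zero_constant[OF convex_ball Qd] by blast
  define c' where "c' i = (if i = 0 then C else c (i-1) / real i)" for i
  have "f y = (\<Sum>i<Suc k. c' i * y^i)" if y: "y \<in> ball x0 e2" for y
  proof -
    have "(\<Sum>i<Suc k. c' i * y^i) = C + (\<Sum>i<k. c i * y^(Suc i) / real (Suc i))"
      by (subst sum.lessThan_Suc_shift) (simp add: c'_def del: of_nat_Suc)
    then show ?thesis using C y by (simp add: P_def algebra_simps)
  qed
  then show ?case using e2 by blast
qed

theorem mainTheorem4: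
  fixes f g h :: "real \<Rightarrow> real" and X U :: "real set" and x0 :: real and n :: nat
  assumes "balanced f g h X U"
    and "card X = n" and "n \<ge> 1"
    and "x0 \<in> X" and "h x0 \<noteq> 0"
  shows "\<exists>p :: real poly. (p = 0 \<or> degree p + 2 \<le> n) \<and>
           (\<exists>e>0. ball x0 e \<subseteq> U \<and> (\<forall>y\<in>ball x0 e. f y = poly p y))"
proof -
  have oU: "open U" and finX: "finite X" and XU: "X \<subseteq> U" and contU: "continuous_on U f"
    and injg: "inj_on g X" and ex: "\<exists>\<epsilon>>0. \<forall>s t. \<bar>s\<bar> < \<epsilon> \<longrightarrow> \<bar>t\<bar> < \<epsilon> \<longrightarrow> (\<Sum>x\<in>X. h x * f (x + s + t * g x)) = 0"
    using assms(1) unfolding balanced_def by auto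
  obtain \<epsilon> where \<epsilon>: "\<epsilon> > 0" and bal: "\<And>s t. \<bar>s\<bar> < \<epsilon> \<Longrightarrow> \<bar>t\<bar> < \<epsilon> \<Longrightarrow> (\<Sum>x\<in>X. h x * f (x + s + t * g x)) = 0"
    using ex by blast
  define Y where "Y = X - {x0}"
  have finY: "finite Y" using finX by (simp add: Y_def)
  obtain xs where setxs: "set xs = Y" and dxs: "distinct xs" using finite_distinct_list[OF finY] by blast
  have lxs: "length xs = n - 1"
    using distinct_card[OF dxs] setxs assms(2,4) finX by (simp add: Y_def card_Diff_singleton)
  have cne: "g x0 - g x \<noteq> 0" if "x \<in> Y" for x
    using that injg assms(4) unfolding Y_def inj_on_def by force
  define M where "M = Max (insert 1 ((\<lambda>x. (1 + \<bar>g x\<bar>) / \<bar>g x0 - g x\<bar>) ` Y))"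
  have M1: "1 \<le> M" unfolding M_def using finY by (intro Max_ge) auto
  have Mb: "(1 + \<bar>g x\<bar>) / \<bar>g x0 - g x\<bar> \<le> M" if "x \<in> Y" for x
    unfolding M_def using finY that by (intro Max_ge) auto
  obtain R where R: "R > 0" "ball x0 R \<subseteq> U" using oU XU assms(4) open_contains_ball by blast
  define r where "r = min R (\<epsilon> / (1 + real n * M))"
  have npos: "0 < 1 + real n * M" using M1 by (simp add: add_pos_nonneg)
  have r: "0 < r" using R \<epsilon> npos by (simp add: r_def)
  have rle: "r * (1 + real n * M) \<le> \<epsilon>" using npos by (simp add: r_def pos_le_divide_eq[symmetric])
  have H: "D es f y = 0" if y: "y \<in> ball x0 r" and l: "length es = n - 1" and es: "\<forall>e\<in>set es. \<bar>e\<bar> < r" for y es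
  proof -
    define u where "u = y - x0"
    define st where "st x e = (-(e/(g x0 - g x)) * g x, e/(g x0 - g x))" for x e
    define ds where "ds = map (\<lambda>(x,e). st x e) (zip xs es)"
    define W where "W = (\<lambda>x s t. f (x + (s + t * g x)))" 
    have \<Phi>0: "(\<Sum>x\<in>X. h x * W x s t) = 0" if "\<bar>s\<bar> < \<epsilon>" "\<bar>t\<bar> < \<epsilon>" for s t
      using bal[OF that] by (simp add: W_def add.assoc)
    have bnd: "\<bar>fst v\<bar> \<le> r * M \<and> \<bar>snd v\<bar> \<le> r * M" if v: "v \<in> set ds" for v
    proof -
      obtain x e where xe: "(x,e) \<in> set (zip xs es)" and vst: "v = st x e" using v unfolding ds_def by auto
      have x: "x \<in> Y" using set_zip_leftD[OF xe] setxs by simp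
      have e: "\<bar>e\<bar> < r" using set_zip_rightD[OF xe] es by simp
      define c where "c = \<bar>g x0 - g x\<bar>"
      have c: "c > 0" using cne[OF x] by (simp add: c_def)
      have q: "\<bar>e\<bar> * ((1 + \<bar>g x\<bar>) / c) \<le> r * M"
        using e Mb[OF x] by (intro mult_mono) (auto simp: c_def)
      have "\<bar>fst v\<bar> = \<bar>e\<bar> * (\<bar>g x\<bar> / c)" by (simp add: vst st_def c_def abs_mult)
      also have "\<dots> \<le> \<bar>e\<bar> * ((1 + \<bar>g x\<bar>) / c)" using c by (intro mult_left_mono divide_right_mono) auto
      finally have 1: "\<bar>fst v\<bar> \<le> r * M" using q by linarith
      have "\<bar>snd v\<bar> = \<bar>e\<bar> * (1 / c)" by (simp add: vst st_def c_def)
      also have "\<dots> \<le> \<bar>e\<bar> * ((1 + \<bar>g x\<bar>) / c)" using c by (intro mult_left_mono divide_right_mono) auto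
      finally have 2: "\<bar>snd v\<bar> \<le> r * M" using q by linarith
      show ?thesis using 1 2 by blast
    qed
    have lds: "length ds = n - 1" using l lxs by (simp add: ds_def)
    have "real (n - 1) * (r * M) \<le> real n * (r * M)" using r M1 by (intro mult_right_mono) auto
    then have nb: "real (n - 1) * (r * M) + r \<le> \<epsilon>" using rle by (simp add: algebra_simps)
    have s1: "sum_list (map (\<lambda>v. \<bar>fst v\<bar>) ds) \<le> real (n - 1) * (r * M)"
    proof -
      have b: "\<And>z. z \<in> set (map (\<lambda>v. \<bar>fst v\<bar>) ds) \<Longrightarrow> z \<le> r * M" using bnd by auto
      have "sum_list (map (\<lambda>v. \<bar>fst v\<bar>) ds) \<le> real (length (map (\<lambda>v. \<bar>fst v\<bar>) ds)) * (r * M)"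
        by (rule sum_list_le_len) (rule b)
      then show ?thesis using lds by simp
    qed
    have s2: "sum_list (map (\<lambda>v. \<bar>snd v\<bar>) ds) \<le> real (n - 1) * (r * M)"
    proof -
      have b: "\<And>z. z \<in> set (map (\<lambda>v. \<bar>snd v\<bar>) ds) \<Longrightarrow> z \<le> r * M" using bnd by auto
      have "sum_list (map (\<lambda>v. \<bar>snd v\<bar>) ds) \<le> real (length (map (\<lambda>v. \<bar>snd v\<bar>) ds)) * (r * M)"
        by (rule sum_list_le_len) (rule b)
      then show ?thesis using lds by simp
    qed
    have ur: "\<bar>u\<bar> < r" using y by (simp add: u_def dist_real_def abs_minus_commute)
    have "D2 ds (\<lambda>s t. \<Sum>x\<in>X. h x * W x s t) u 0 = 0"
      by (rule D2_zero[OF \<Phi>0]) (use s1 s2 ur nb r in auto)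
    then have sum0: "(\<Sum>x\<in>X. h x * D2 ds (W x) u 0) = 0" by (simp add: D2_sum)
    have kill: "D2 ds (W x) u 0 = 0" if x: "x \<in> Y" for x
    proof -
      obtain i where i: "i < length xs" "xs ! i = x" using x setxs by (auto simp: in_set_conv_nth)
      have "(xs ! i, es ! i) \<in> set (zip xs es)" using i l lxs by (auto simp: in_set_zip)
      then have "st x (es ! i) \<in> set ds" unfolding ds_def using i by force
      moreover have "fst (st x (es ! i)) + snd (st x (es ! i)) * g x = 0" by (simp add: st_def)
      ultimately have "D2 ds (\<lambda>s t. (\<lambda>z. f (x + z)) (s + t * g x)) u 0 = 0"
        using D2_kill[of "fst (st x (es ! i))" "snd (st x (es ! i))" "g x" ds "\<lambda>z. f (x + z)"] by simp
      then show ?thesis by (simp add: W_def)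
    qed
    have "(\<Sum>x\<in>X. h x * D2 ds (W x) u 0) = h x0 * D2 ds (W x0) u 0"
      using sum.remove[OF finX assms(4), of "\<lambda>x. h x * D2 ds (W x) u 0"] kill by (simp add: Y_def)
    then have h0: "h x0 * D2 ds (W x0) u 0 = 0" using sum0 by simp
    have meq: "map (\<lambda>(a,b). a + b * g x0) ds = es"
    proof -
      have "map (\<lambda>(a,b). a + b * g x0) ds = map snd (zip xs es)"
        unfolding ds_def map_map
      proof (rule map_cong[OF refl])
        fix p assume p: "p \<in> set (zip xs es)"
        obtain x e where pe: "p = (x, e)" by fastforce
        have x: "x \<in> Y" using set_zip_leftD[of x e xs es] p pe setxs by simp
        show "((\<lambda>(a,b). a + b * g x0) \<circ> (\<lambda>(x,e). st x e)) p = snd p"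
        proof -
          have "-(e/(g x0 - g x)) * g x + e/(g x0 - g x) * g x0 = e/(g x0 - g x) * (g x0 - g x)"
            by (simp add: algebra_simps diff_divide_distrib)
          also have "\<dots> = e" using cne[OF x] by simp
          finally show ?thesis by (simp add: pe st_def)
        qed
      qed
      also have "\<dots> = es" using l lxs by simp
      finally show ?thesis .
    qed
    have "D2 ds (W x0) u 0 = D2 ds (\<lambda>s t. (\<lambda>z. f (x0 + z)) (s + t * g x0)) u 0" by (simp add: W_def)
    also have "\<dots> = D es (\<lambda>z. f (x0 + z)) u"
      using D2_comp[of ds "\<lambda>z. f (x0 + z)" "g x0" u 0] meq by simp
    also have "\<dots> = D es f y" by (simp add: D_shift u_def)
    finally show ?thesis using h0 assms(5) by simp
  qed
  have cont: "continuous_on (ball x0 r) f"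
    using contU by (rule continuous_on_subset) (use R in \<open>auto simp: r_def\<close>)
  obtain c e where e: "e > 0" and fc: "\<forall>y\<in>ball x0 e. f y = (\<Sum>i<n-1. c i * y^i)"
    using poly_local[OF r cont, of "n - 1"] H by blast
  define p where "p = (\<Sum>i<n-1. monom (c i) i)"
  have pp: "poly p y = (\<Sum>i<n-1. c i * y^i)" for y by (simp add: p_def poly_sum poly_monom)
  have deg: "p = 0 \<or> degree p + 2 \<le> n"
  proof (cases "n - 1 = 0")
    case True then show ?thesis by (simp add: p_def)
  next
    case False
    have "degree p \<le> n - 2" unfolding p_def
    proof (rule degree_sum_le)
      fix i assume "i \<in> {..<n-1}"
      then show "degree (monom (c i) i) \<le> n - 2" using degree_monom_le[of "c i" i] by simp
    qed simp
    then show ?thesis using False by linarith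
  qed
  define e' where "e' = min e r"
  have "ball x0 e' \<subseteq> U" using R by (auto simp: e'_def r_def)
  moreover have "\<forall>y\<in>ball x0 e'. f y = poly p y" using fc pp by (auto simp: e'_def)
  moreover have "e' > 0" using e r by (simp add: e'_def)
  ultimately show ?thesis using deg by blast
qed

end
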